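(* For every pair of positive integers $g,k$, every graph $G_{g,k}$ obtained by the construction described in the context satisfies $\chi(G_{g,k})\ge k$.
   Context: Hypergraph notions. A closed walk of length $\ell$ in a hypergraph $H$ is a sequence $v_0F_0v_1F_1\ldots F_{\ell-1}v_0$ with $v_i,v_{i+1}\in F_i$ for all $0\le i<\ell$ (indices mod $\ell$), $F_i\ne F_{i+1}$ for all $i$ (indices mod $\ell$), and $v_1,\ldots,v_{\ell-1}$ pairwise distinct. An $r$-uniform hypergraph $H$ is tranquil, witnessed by labellings $\lambda=\{\lambda_F\}_{F\in E(H)}$ with $\lambda_F:F\to\{1,\dots,r\}$, if for every closed walk $W=v_0F_0\ldots F_{\ell-1}v_0$ the multigraph on $\{1,\dots,r\}$ with edge multiset $\{\lambda_{F_i}(v_i)\lambda_{F_i}(v_{i+1}):0\le i<\ell\}$ is bridgeless. The chromatic number of a hypergraph is the least number of colours in a vertex colouring with no monochromatic hyperedge; its girth is the length of a shortest Berge cycle (distinct hyperedges $F_1,\dots,F_\ell$ and distinct vertices $x_1,\dots,x_\ell$ with $x_i\in F_i\cap F_{i+1}$, indices mod $\ell$). Construction. Fix a positive integer $g$. $G_{g,1}$ is a single vertex. For $k\ge 2$, given a graph $G_{g,k-1}$ obtained by the construction, with vertex set identified with $\{1,\dots,r\}$, take a finite tranquil $r$-uniform hypergraph $H$ with chromatic number at least $k$ and girth at least $\lceil g/3\rceil$, together with tranquility-witnessing labellings $\lambda_F$, each $\lambda_F:F\to\{1,\dots,r\}$ a bijection. The graph $G_{g,k}$ consists of an independent set $T$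 with a bijection $\nu:T\to V(H)$, together with, for each hyperedge $F\in E(H)$, a disjoint copy $G_F$ of $G_{g,k-1}$; for each $F\in E(H)$ one adds the perfect matching between $G_F$ and $\nu^{-1}(F)$ joining the vertex of $G_F$ corresponding to $i\in\{1,\dots,r\}$ to the vertex $t\in\nu^{-1}(F)$ with $\lambda_F(\nu(t))=i$. No other edges are present. $\chi$ denotes the (vertex) chromatic number of a graph. *)

theory Defs
  imports Complex_Main
begin

definition uniform_hypergraph :: "'a set \<Rightarrow> 'a set set \<Rightarrow> nat \<Rightarrow> bool" where
  "uniform_hypergraph T EH r \<longleftrightarrow> finite T \<and> (\<forall>F\<in>EH. F \<subseteq> T \<and> card F = r)"

definition closed_walk ::
  "'a set set \<Rightarrow> nat \<Rightarrow> (nat \<Rightarrow> 'a) \<Rightarrow> (nat \<Rightarrow> 'a set) \<Rightarrow> bool" where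
  "closed_walk EH l v F \<longleftrightarrow> 0 < l \<and>
     (\<forall>i<l. F i \<in> EH \<and> v i \<in> F i \<and> v ((i + 1) mod l) \<in> F i \<and> F i \<noteq> F ((i + 1) mod l))
     \<and> inj_on v {1..<l}"

text \<open>A multigraph given by the edge list (a i, b i), i < l, is bridgeless: no edge
  whose endpoints become disconnected once that single edge is deleted
  (loops are never bridges).\<close>
definition bridgeless_multigraph :: "nat \<Rightarrow> (nat \<Rightarrow> nat) \<Rightarrow> (nat \<Rightarrow> nat) \<Rightarrow> bool" where
  "bridgeless_multigraph l a b \<longleftrightarrow>
     (\<forall>j<l. (a j, b j) \<in> ({(a i, b i) | i. i < l \<and> i \<noteq> j} \<union>
                            {(b i, a i) | i. i < l \<and> i \<noteq> j})\<^sup>*)"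

definition tranquil :: "'a set \<Rightarrow> 'a set set \<Rightarrow> ('a set \<Rightarrow> 'a \<Rightarrow> nat) \<Rightarrow> bool" where
  "tranquil T EH lam \<longleftrightarrow>
     (\<forall>l v F. closed_walk EH l v F \<longrightarrow>
        bridgeless_multigraph l (\<lambda>i. lam (F i) (v i)) (\<lambda>i. lam (F i) (v ((i + 1) mod l))))"

definition hyper_chromatic_ge :: "'a set \<Rightarrow> 'a set set \<Rightarrow> nat \<Rightarrow> bool" where
  "hyper_chromatic_ge T EH k \<longleftrightarrow>
     (\<forall>n<k. \<forall>c :: 'a \<Rightarrow> nat. (\<forall>x\<in>T. c x < n) \<longrightarrow>
        (\<exists>F\<in>EH. \<forall>x\<in>F. \<forall>y\<in>F. c x = c y))"

definition berge_cycle :: "'a set set \<Rightarrow> nat \<Rightarrow> (nat \<Rightarrow> 'a set) \<Rightarrow> (nat \<Rightarrow> 'a) \<Rightarrow> bool" where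
  "berge_cycle EH l F x \<longleftrightarrow> 2 \<le> l \<and> inj_on F {..<l} \<and> inj_on x {..<l} \<and>
     (\<forall>i<l. F i \<in> EH \<and> x i \<in> F i \<and> x i \<in> F ((i + 1) mod l))"

definition girth_ge :: "'a set set \<Rightarrow> nat \<Rightarrow> bool" where
  "girth_ge EH m \<longleftrightarrow> (\<forall>l F x. berge_cycle EH l F x \<longrightarrow> m \<le> l)"

definition chromatic_number :: "'a set \<Rightarrow> ('a \<times> 'a) set \<Rightarrow> nat" where
  "chromatic_number V E =
     (LEAST n. \<exists>c :: 'a \<Rightarrow> nat. (\<forall>x\<in>V. c x < n) \<and> (\<forall>(x, y)\<in>E. c x \<noteq> c y))"

text \<open>The hypergraph H is taken with vertex set T itself (i.e. nu is the identity);
  phi F embeds G_{g,k-1} as the copy G_F; sigma identifies V(G_{g,k-1}) with {1..r}.\<close>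
inductive constructed :: "nat \<Rightarrow> nat \<Rightarrow> 'a set \<Rightarrow> ('a \<times> 'a) set \<Rightarrow> bool" for g where
  base: "constructed g 1 {v} {}"
| step: "\<lbrakk> 2 \<le> k;
           constructed g (k - 1) V' E';
           r = card V';
           bij_betw \<sigma> V' {1..r};
           uniform_hypergraph T EH r;
           \<forall>F\<in>EH. bij_betw (lam F) F {1..r};
           tranquil T EH lam;
           hyper_chromatic_ge T EH k;
           girth_ge EH (nat \<lceil>real g / 3\<rceil>);
           \<forall>F\<in>EH. inj_on (\<phi> F) V' \<and> \<phi> F ` V' \<inter> T = {};
           \<forall>F\<in>EH. \<forall>F'\<in>EH. F \<noteq> F' \<longrightarrow> \<phi> F ` V' \<inter> \<phi> F' ` V' = {};
           V = T \<union> (\<Union>F\<in>EH. \<phi> F ` V');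
           E = {(\<phi> F x, \<phi> F y) | F x y. F \<in> EH \<and> (x, y) \<in> E'}
             \<union> {(\<phi> F x, t) | F x t. F \<in> EH \<and> x \<in> V' \<and> t \<in> F \<and> lam F t = \<sigma> x}
             \<union> {(t, \<phi> F x) | F x t. F \<in> EH \<and> x \<in> V' \<and> t \<in> F \<and> lam F t = \<sigma> x} \<rbrakk>
         \<Longrightarrow> constructed g k V E"

end

theory Submission
  imports Defs
begin

lemma inv_constructed:
  assumes "constructed g k V E"
  shows "finite V \<and> E \<subseteq> V \<times> V \<and> (\<forall>x. (x, x) \<notin> E)"
  using assms
proof (induction rule: constructed.induct)
  case (base v)
  then show ?case by simp
next
  case (step k V' E' r \<sigma> T EH lam \<phi> V E)
  have fT: "finite T" using step.hyps(5) by (simp add: uniform_hypergraph_def)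
  have "EH \<subseteq> Pow T" using step.hyps(5) by (auto simp: uniform_hypergraph_def)
  hence fEH: "finite EH" using fT by (meson finite_Pow_iff finite_subset)
  have fin: "finite V" using step fT fEH by auto
  have sub: "E \<subseteq> V \<times> V"
  proof
    fix p assume "p \<in> E"
    then show "p \<in> V \<times> V" using step.hyps(12,13) step.IH step.hyps(5)
      unfolding uniform_hypergraph_def by blast
  qed
  have irr: "\<forall>x. (x, x) \<notin> E"
  proof (intro allI notI)
    fix z assume "(z, z) \<in> E"
    then consider (a) F x y where "F \<in> EH" "(x, y) \<in> E'" "z = \<phi> F x" "z = \<phi> F y"
      | (b) F x t where "F \<in> EH" "x \<in> V'" "t \<in> F" "z = \<phi> F x" "z = t"
      | (c) F x t where "F \<in> EH" "x \<in> V'" "t \<in> F" "z = t" "z = \<phi> F x"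
      using step.hyps(13) by blast
    then show False
    proof cases
      case a
      then have "x \<in> V'" "y \<in> V'" using step.IH by auto
      then have "x = y" using a step.hyps(10) by (metis inj_on_def)
      then show ?thesis using a step.IH by auto
    next
      case b
      then show ?thesis using step.hyps(5,10) unfolding uniform_hypergraph_def by blast
    next
      case c
      then show ?thesis using step.hyps(5,10) unfolding uniform_hypergraph_def by blast
    qed
  qed
  show ?case using fin sub irr by blast
qed

lemma main_constructed:
  assumes "constructed g k V E"
  shows "\<forall>c n. (\<forall>x\<in>V. c x < (n::nat)) \<and> (\<forall>(x, y)\<in>E. c x \<noteq> c y) \<longrightarrow> k \<le> n"
  using assms
proof (induction rule: constructed.induct)
  case (base v)
  then show ?case by auto
next
  case (step k V' E' r \<sigma> T EH lam \<phi> V E)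
  show ?case
  proof (intro allI impI)
    fix c :: "'a \<Rightarrow> nat" and n
    assume h: "(\<forall>x\<in>V. c x < n) \<and> (\<forall>(x, y)\<in>E. c x \<noteq> c y)"
    show "k \<le> n"
    proof (rule ccontr)
      assume "\<not> k \<le> n"
      hence nk: "n < k" by simp
      have cT: "\<forall>x\<in>T. c x < n" using h step.hyps(12) by auto
      obtain F where F: "F \<in> EH" "\<forall>x\<in>F. \<forall>y\<in>F. c x = c y"
        using step.hyps(8) nk cT unfolding hyper_chromatic_ge_def by blast
      define a where "a = c (SOME t. t \<in> F)"
      define c' where "c' = (\<lambda>x. if c (\<phi> F x) > a then c (\<phi> F x) - 1 else c (\<phi> F x))"
      have ex: "\<exists>t\<in>F. lam F t = \<sigma> x" if "x \<in> V'" for x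
      proof -
        have "\<sigma> x \<in> {1..r}" using step.hyps(4) that by (auto simp: bij_betw_def)
        then show ?thesis using step.hyps(6) F(1) by (metis bij_betw_def imageE)
      qed
      have FT: "F \<subseteq> T" using step.hyps(5) F(1) by (auto simp: uniform_hypergraph_def)
      have props: "c (\<phi> F x) \<noteq> a \<and> a < n \<and> c (\<phi> F x) < n" if xV: "x \<in> V'" for x
      proof -
        obtain t where t: "t \<in> F" "lam F t = \<sigma> x" using ex[OF xV] by blast
        have "(\<phi> F x, t) \<in> E" using step.hyps(13) F(1) xV t by blast
        hence "c (\<phi> F x) \<noteq> c t" using h by auto
        moreover have "c t = a" unfolding a_def using F(2) t(1) by (metis someI)
        moreover have "c t < n" using cT t FT by auto
        moreover have "\<phi> F x \<in> V" using step.hyps(12) F(1) xV by auto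
        ultimately show ?thesis using h by auto
      qed
      have E'sub: "E' \<subseteq> V' \<times> V'" using inv_constructed[OF step.hyps(2)] by simp
      have c1: "\<forall>x\<in>V'. c' x < n - 1"
      proof
        fix x assume "x \<in> V'"
        from props[OF this] show "c' x < n - 1" unfolding c'_def by auto
      qed
      have c2: "\<forall>(x, y)\<in>E'. c' x \<noteq> c' y"
      proof (clarify)
        fix x y assume xy: "(x, y) \<in> E'" "c' x = c' y"
        then have "x \<in> V'" "y \<in> V'" using E'sub by auto
        moreover have "(\<phi> F x, \<phi> F y) \<in> E" using step.hyps(13) F(1) xy(1) by blast
        hence "c (\<phi> F x) \<noteq> c (\<phi> F y)" using h by auto
        ultimately show False using props xy(2) unfolding c'_def
          by (smt (verit) One_nat_def Suc_pred diff_Suc_1 gr0I less_Suc_eq not_less_eq)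
      qed
      have "k - 1 \<le> n - 1" using step.IH c1 c2 by blast
      then show False using nk step.hyps(1) by linarith
    qed
  qed
qed

theorem lemma4p3:
  fixes g k :: nat and V :: "'a set" and E :: "('a \<times> 'a) set"
  assumes "0 < g" and "0 < k"
    and "constructed g k V E"
  shows "k \<le> chromatic_number V E"
proof -
  have inv: "finite V" "E \<subseteq> V \<times> V" "\<forall>x. (x, x) \<notin> E"
    using inv_constructed[OF assms(3)] by auto
  obtain f where f: "bij_betw f V {..<card V}"
    using ex_bij_betw_finite_nat[OF inv(1)] atLeast0LessThan by metis
  have P: "\<exists>c :: 'a \<Rightarrow> nat. (\<forall>x\<in>V. c x < card V) \<and> (\<forall>(x, y)\<in>E. c x \<noteq> c y)"
  proof (intro exI conjI)
    show "\<forall>x\<in>V. f x < card V" using f by (auto simp: bij_betw_def)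
    show "\<forall>(x, y)\<in>E. f x \<noteq> f y"
    proof clarify
      fix x y assume "(x, y) \<in> E" "f x = f y"
      then show False using inv f by (metis bij_betw_def inj_on_def mem_Sigma_iff subsetD)
    qed
  qed
  have "\<exists>c :: 'a \<Rightarrow> nat. (\<forall>x\<in>V. c x < chromatic_number V E) \<and> (\<forall>(x, y)\<in>E. c x \<noteq> c y)"
    unfolding chromatic_number_def by (rule LeastI_ex) (use P in blast)
  then show ?thesis using main_constructed[OF assms(3)] by blast
qed

end
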